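(* Let $\mathcal{N}$ be a cactus network. Then every nonempty set of vertices of $\mathcal{N}$ has a unique lowest common ancestor.
   Context: A cactus network is a finite directed acyclic graph $\mathcal{N}$ with a unique vertex of indegree $0$ (the root) such that in its underlying undirected graph $\mathcal{N}^\star$ every edge belongs to at most one simple cycle. For vertices $u,v$, $u\succcurlyeq v$ ($u$ is an ancestor of $v$) means there is a directed path from $u$ to $v$ (possibly of length $0$), and $u\succ v$ means $u\succcurlyeq v$ and $u\ne v$. A lowest common ancestor of a set $V$ of vertices is a vertex $u$ with $u\succcurlyeq v$ for all $v\in V$ such that there is no vertex $u'$ with $u\succ u'$ and $u'\succcurlyeq v$ for all $v\in V$. *)

theory Defs
  imports Main
begin

definition uadj :: "('a \<times> 'a) set \<Rightarrow> 'a \<Rightarrow> 'a \<Rightarrow> bool" where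
  "uadj E u v \<longleftrightarrow> (u, v) \<in> E \<or> (v, u) \<in> E"

definition simple_cycle :: "('a \<times> 'a) set \<Rightarrow> 'a list \<Rightarrow> bool" where
  "simple_cycle E cs \<longleftrightarrow> length cs \<ge> 3 \<and> distinct cs \<and>
     (\<forall>i < length cs. uadj E (cs ! i) (cs ! ((i + 1) mod length cs)))"

definition cycle_edges :: "'a list \<Rightarrow> 'a set set" where
  "cycle_edges cs = {{cs ! i, cs ! ((i + 1) mod length cs)} | i. i < length cs}"

definition cactus_network :: "'a set \<Rightarrow> ('a \<times> 'a) set \<Rightarrow> bool" where
  "cactus_network V E \<longleftrightarrow>
     finite V \<and> E \<subseteq> V \<times> V \<and> acyclic E \<and>
     (\<exists>!r. r \<in> V \<and> (\<nexists>x. (x, r) \<in> E)) \<and>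
     (\<forall>e c1 c2. simple_cycle E c1 \<and> simple_cycle E c2 \<and>
        e \<in> cycle_edges c1 \<and> e \<in> cycle_edges c2 \<longrightarrow> cycle_edges c1 = cycle_edges c2)"

definition is_lca :: "'a set \<Rightarrow> ('a \<times> 'a) set \<Rightarrow> 'a set \<Rightarrow> 'a \<Rightarrow> bool" where
  "is_lca V E S u \<longleftrightarrow> u \<in> V \<and> (\<forall>v \<in> S. (u, v) \<in> E\<^sup>*) \<and>
     \<not> (\<exists>u'. (u, u') \<in> E\<^sup>* \<and> u \<noteq> u' \<and> (\<forall>v \<in> S. (u', v) \<in> E\<^sup>*))"

end

theory Submission
  imports Defs
begin

fun dwalk :: "('a \<times> 'a) set \<Rightarrow> 'a list \<Rightarrow> bool" where
  "dwalk E [] = True" | "dwalk E [x] = True" | "dwalk E (x#y#xs) = ((x,y) \<in> E \<and> dwalk E (y#xs))"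

fun uwalk :: "('a \<times> 'a) set \<Rightarrow> 'a list \<Rightarrow> bool" where
  "uwalk E [] = True" | "uwalk E [x] = True" | "uwalk E (x#y#xs) = (uadj E x y \<and> uwalk E (y#xs))"

fun wedges :: "'a list \<Rightarrow> 'a set set" where
  "wedges [] = {}" | "wedges [x] = {}" | "wedges (x#y#xs) = insert {x,y} (wedges (y#xs))"

lemma dwalk_uwalk: "dwalk E xs \<Longrightarrow> uwalk E xs"
  by (induction E xs rule: dwalk.induct) (auto simp: uadj_def)

lemma uwalk_append: "uwalk E (xs @ ys) \<longleftrightarrow> uwalk E xs \<and> uwalk E ys \<and> (xs \<noteq> [] \<longrightarrow> ys \<noteq> [] \<longrightarrow> uadj E (last xs) (hd ys))"
proof (induction xs)
  case Nil then show ?case by simp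
next
  case (Cons x xs) then show ?case by (cases xs; cases ys) auto
qed

lemma dwalk_append: "dwalk E (xs @ ys) \<longleftrightarrow> dwalk E xs \<and> dwalk E ys \<and> (xs \<noteq> [] \<longrightarrow> ys \<noteq> [] \<longrightarrow> (last xs, hd ys) \<in> E)"
proof (induction xs)
  case Nil then show ?case by simp
next
  case (Cons x xs) then show ?case by (cases xs; cases ys) auto
qed

lemma uadj_sym: "uadj E x y = uadj E y x" by (auto simp: uadj_def)

lemma uwalk_rev: "uwalk E xs \<Longrightarrow> uwalk E (rev xs)"
proof (induction xs)
  case Nil then show ?case by simp
next
  case (Cons x xs) then show ?case by (cases xs) (auto simp: uwalk_append uadj_sym)
qed

lemma dwalk_rtrancl: "dwalk E xs \<Longrightarrow> x' \<in> set xs \<Longrightarrow> (hd xs, x') \<in> E\<^sup>* \<and> (x', last xs) \<in> E\<^sup>*"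
proof (induction E xs arbitrary: x' rule: dwalk.induct)
  case (3 E x y xs)
  have l: "(y, last (y#xs)) \<in> E\<^sup>*" using 3(1)[of y] 3(2) by simp
  show ?case
  proof (cases "x' = x")
    case True
    then show ?thesis using 3 l by (auto intro: converse_rtrancl_into_rtrancl)
  next
    case False
    then have "x' \<in> set (y#xs)" using 3 by simp
    then show ?thesis using 3(1)[of x'] 3(2) by (auto intro: converse_rtrancl_into_rtrancl)
  qed
qed auto

lemma dwalk_trancl: "dwalk E (x#xs) \<Longrightarrow> y \<in> set xs \<Longrightarrow> (x, y) \<in> E\<^sup>+"
proof (induction xs arbitrary: x)
  case Nil then show ?case by simp
next
  case (Cons a xs) then show ?case by (auto intro: trancl_into_trancl2)
qed

lemma dwalk_distinct: "acyclic E \<Longrightarrow> dwalk E xs \<Longrightarrow> distinct xs"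
proof (induction xs)
  case Nil then show ?case by simp
next
  case (Cons x xs)
  have "dwalk E xs" using Cons.prems by (cases xs) auto
  moreover have "x \<notin> set xs" using dwalk_trancl[OF Cons.prems(2)] Cons.prems(1) by (auto simp: acyclic_def)
  ultimately show ?case using Cons by auto
qed

lemma rtrancl_dwalk: "(u,v) \<in> E\<^sup>* \<Longrightarrow> \<exists>xs. dwalk E xs \<and> xs \<noteq> [] \<and> hd xs = u \<and> last xs = v"
proof (induction rule: converse_rtrancl_induct)
  case base then show ?case by (intro exI[of _ "[v]"]) auto
next
  case (step y z)
  then obtain xs where "dwalk E xs" "xs \<noteq> []" "hd xs = z" "last xs = v" by blast
  then show ?case using step by (intro exI[of _ "y # xs"]) (cases xs, auto)
qed

lemma uwalk_nth: "uwalk E xs \<longleftrightarrow> (\<forall>i. Suc i < length xs \<longrightarrow> uadj E (xs!i) (xs!Suc i))"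
proof (induction E xs rule: uwalk.induct)
  case (3 E x y xs)
  show ?case
  proof
    assume "uwalk E (x # y # xs)"
    then show "\<forall>i. Suc i < length (x # y # xs) \<longrightarrow> uadj E ((x # y # xs) ! i) ((x # y # xs) ! Suc i)"
      using 3 by (auto simp: nth_Cons split: nat.splits)
  next
    assume h: "\<forall>i. Suc i < length (x # y # xs) \<longrightarrow> uadj E ((x # y # xs) ! i) ((x # y # xs) ! Suc i)"
    have "uadj E x y" using h[rule_format, of 0] by simp
    moreover have "uwalk E (y#xs)" using 3 h[rule_format, of "Suc _"] by auto
    ultimately show "uwalk E (x # y # xs)" by simp
  qed
qed auto

lemma wedges_nth: "wedges xs = {{xs!i, xs!Suc i} | i. Suc i < length xs}"
proof (induction xs rule: wedges.induct)
  case (3 x y xs)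
  have "{{(x#y#xs)!i, (x#y#xs)!Suc i} | i. Suc i < length (x#y#xs)} =
        insert {x,y} {{(y#xs)!i, (y#xs)!Suc i} | i. Suc i < length (y#xs)}"
    (is "?L = ?R")
  proof
    show "?L \<subseteq> ?R"
    proof
      fix e assume "e \<in> ?L"
      then obtain i where i: "e = {(x#y#xs)!i, (x#y#xs)!Suc i}" "Suc i < length (x#y#xs)" by blast
      show "e \<in> ?R"
      proof (cases i)
        case 0 then show ?thesis using i by simp
      next
        case (Suc j) then show ?thesis using i by auto
      qed
    qed
    show "?R \<subseteq> ?L"
    proof
      fix e assume "e \<in> ?R"
      then show "e \<in> ?L"
      proof
        assume "e = {x,y}" then show ?thesis by (intro CollectI exI[of _ 0]) auto
      next
        assume "e \<in> {{(y#xs)!i, (y#xs)!Suc i} | i. Suc i < length (y#xs)}"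
        then obtain i where "e = {(y#xs)!i, (y#xs)!Suc i}" "Suc i < length (y#xs)" by blast
        then show ?thesis by (intro CollectI exI[of _ "Suc i"]) auto
      qed
    qed
  qed
  then show ?case using 3 by simp
qed auto

lemma nth_close: "i < length cs \<Longrightarrow> (cs @ [hd cs]) ! Suc i = cs ! ((i+1) mod length cs)"
proof (cases "Suc i < length cs")
  case True then show ?thesis by (auto simp: nth_append)
next
  case False
  assume i: "i < length cs"
  then have "Suc i = length cs" using False by simp
  moreover have "cs \<noteq> []" using i by auto
  ultimately show ?thesis using i by (auto simp: nth_append hd_conv_nth)
qed

lemma cycle_edges_wedges: "cs \<noteq> [] \<Longrightarrow> cycle_edges cs = wedges (cs @ [hd cs])"
proof -
  assume ne: "cs \<noteq> []"
  have "wedges (cs @ [hd cs]) = {{(cs @ [hd cs])!i, (cs @ [hd cs])!Suc i} | i. Suc i < length (cs @ [hd cs])}"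
    by (rule wedges_nth)
  also have "\<dots> = {{(cs @ [hd cs])!i, (cs @ [hd cs])!Suc i} | i. i < length cs}"
    by simp
  also have "\<dots> = {{cs ! i, cs ! ((i + 1) mod length cs)} | i. i < length cs}"
  proof -
    have "\<And>i. i < length cs \<Longrightarrow> {(cs @ [hd cs])!i, (cs @ [hd cs])!Suc i} = {cs ! i, cs ! ((i + 1) mod length cs)}"
      by (simp only: nth_close) (simp add: nth_append)
    then show ?thesis by blast
  qed
  finally show ?thesis by (simp add: cycle_edges_def)
qed

lemma simple_cycle_intro: "length cs \<ge> 3 \<Longrightarrow> distinct cs \<Longrightarrow> uwalk E (cs @ [hd cs]) \<Longrightarrow> simple_cycle E cs"
proof -
  assume a: "length cs \<ge> 3" "distinct cs" "uwalk E (cs @ [hd cs])"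
  have "uadj E (cs ! i) (cs ! ((i + 1) mod length cs))" if "i < length cs" for i
  proof -
    have "uadj E ((cs @ [hd cs]) ! i) ((cs @ [hd cs]) ! Suc i)"
      using a(3) that unfolding uwalk_nth by auto
    moreover have "(cs @ [hd cs]) ! i = cs ! i" using that by (simp add: nth_append)
    ultimately show ?thesis using that by (simp only: nth_close)
  qed
  then show ?thesis using a by (simp add: simple_cycle_def)
qed

lemma union_cycle_edges: "cs \<noteq> [] \<Longrightarrow> \<Union>(cycle_edges cs) = set cs"
proof
  show "\<Union>(cycle_edges cs) \<subseteq> set cs"
    by (auto simp: cycle_edges_def intro!: nth_mem mod_less_divisor)
  show "set cs \<subseteq> \<Union>(cycle_edges cs)"
  proof
    fix x assume "x \<in> set cs"
    then obtain i where "i < length cs" "x = cs ! i" by (auto simp: in_set_conv_nth)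
    then show "x \<in> \<Union>(cycle_edges cs)" unfolding cycle_edges_def by blast
  qed
qed

lemma acyc_antisym: "acyclic E \<Longrightarrow> (a,b) \<in> E\<^sup>* \<Longrightarrow> (b,a) \<in> E\<^sup>* \<Longrightarrow> a = b"
  by (metis acyclic_def rtrancl_eq_or_trancl trancl_rtrancl_trancl)

lemma bl_app: "X \<noteq> [] \<Longrightarrow> Y \<noteq> [] \<Longrightarrow> last X = hd Y \<Longrightarrow> butlast X @ Y = X @ tl Y"
  by (metis append_butlast_last_id append_Cons append_assoc append_Nil list.collapse)

lemma uwalk_glue: "uwalk E X \<Longrightarrow> uwalk E Y \<Longrightarrow> X \<noteq> [] \<Longrightarrow> Y \<noteq> [] \<Longrightarrow> last X = hd Y \<Longrightarrow> uwalk E (butlast X @ Y)"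
  apply (simp add: bl_app uwalk_append)
  apply (cases Y)
   apply simp
  apply (rename_tac a r)
  apply (case_tac r)
   apply auto
  done

lemma wedges_append: "wedges xs \<subseteq> wedges (xs @ ys)"
  by (induction xs rule: wedges.induct) auto


lemma bl_mem: "distinct X \<Longrightarrow> x \<in> set (butlast X) \<Longrightarrow> x \<in> set X \<and> x \<noteq> last X"
  by (metis append_butlast_last_id butlast.simps(1) distinct_append disjoint_iff in_set_butlastD list.set_intros(1) empty_iff list.set(1))

lemma construct:
  fixes E :: "('a \<times> 'a) set"
  assumes acyc: "acyclic E"
    and Q1: "dwalk E (w # Q1)" "Q1 \<noteq> []" "last Q1 = u1"
    and Q2: "dwalk E Q2" "Q2 \<noteq> []" "hd Q2 = w" "last Q2 = u2"
    and meet: "\<forall>x\<in>set (w#Q1). x \<in> set Q2 \<longrightarrow> x = w"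
    and inc1: "(u1,u2) \<notin> E\<^sup>*" and inc2: "(u2,u1) \<notin> E\<^sup>*"
    and s1: "(u1,s) \<in> E\<^sup>*" and s2: "(u2,s) \<in> E\<^sup>*"
  shows "\<exists>cs z. simple_cycle E cs \<and> {w, hd Q1} \<in> cycle_edges cs \<and> z \<in> set cs \<and> (u1,z) \<in> E\<^sup>+ \<and>
     (z,s) \<in> E\<^sup>* \<and> (\<forall>x\<in>set cs. (x,u1) \<in> E\<^sup>* \<or> (x,u2) \<in> E\<^sup>* \<or> (x,s) \<in> E\<^sup>*)"
proof -
  obtain P1 where P1: "dwalk E P1" "P1 \<noteq> []" "hd P1 = u1" "last P1 = s" using rtrancl_dwalk[OF s1] by blast
  obtain P2 where P2: "dwalk E P2" "P2 \<noteq> []" "hd P2 = u2" "last P2 = s" using rtrancl_dwalk[OF s2] by blast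
  have ex: "\<exists>x\<in>set P1. x \<in> set P2" using P1 P2 by (metis last_in_set)
  obtain A1 z B1 where sp1: "P1 = A1 @ z # B1" "z \<in> set P2" "\<forall>y\<in>set A1. y \<notin> set P2"
    using split_list_first_prop[OF ex] by blast
  obtain A2 B2 where sp2: "P2 = A2 @ z # B2" using split_list[OF sp1(2)] by blast
  have rP1: "(u1,x) \<in> E\<^sup>* \<and> (x,s) \<in> E\<^sup>*" if "x \<in> set P1" for x using dwalk_rtrancl[OF P1(1) that] P1 by simp
  have rP2: "(u2,x) \<in> E\<^sup>* \<and> (x,s) \<in> E\<^sup>*" if "x \<in> set P2" for x using dwalk_rtrancl[OF P2(1) that] P2 by simp
  have rQ1: "(w,x) \<in> E\<^sup>* \<and> (x,u1) \<in> E\<^sup>*" if "x \<in> set (w#Q1)" for x using dwalk_rtrancl[OF Q1(1) that] Q1 by simp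
  have rQ2: "(w,x) \<in> E\<^sup>* \<and> (x,u2) \<in> E\<^sup>*" if "x \<in> set Q2" for x using dwalk_rtrancl[OF Q2(1) that] Q2 by simp
  have u1P2: "u1 \<notin> set P2" using rP2 inc2 by blast
  have u2P1: "u2 \<notin> set P1" using rP1 inc1 by blast
  have A1ne: "A1 \<noteq> []" using sp1 P1 u1P2 by auto
  have hA1: "hd A1 = u1" using sp1 P1 A1ne by simp
  have A2ne: "A2 \<noteq> []" using sp2 sp1 P2 u2P1 by auto
  have hA2: "hd A2 = u2" using sp2 P2 A2ne by simp
  have wu1: "(w,u1) \<in> E\<^sup>*" using rQ1[of w] by simp
  have wu2: "w \<noteq> u2" using wu1 inc2 by blast
  obtain Q2t where Q2t: "Q2 = w # Q2t" using Q2 by (cases Q2) auto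
  have Q2tne: "Q2t \<noteq> []" using Q2t Q2 wu2 by auto
  define W1 where "W1 = w # Q1"
  define W2 where "W2 = A1 @ [z]"
  define W3 where "W3 = rev (A2 @ [z])"
  define W4 where "W4 = rev Q2"
  have dW2: "dwalk E W2" using P1(1) unfolding sp1(1) W2_def
    by (metis append.assoc append_Cons append_Nil dwalk_append)
  have dA2: "dwalk E (A2 @ [z])" using P2(1) unfolding sp2
    by (metis append.assoc append_Cons append_Nil dwalk_append)
  have dist1: "distinct W1" using dwalk_distinct[OF acyc Q1(1)] W1_def by simp
  have dist2: "distinct W2" using dwalk_distinct[OF acyc dW2] .
  have dist3: "distinct W3" using dwalk_distinct[OF acyc dA2] W3_def by simp
  have dist4: "distinct W4" using dwalk_distinct[OF acyc Q2(1)] W4_def by simp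
  have uw1: "uwalk E W1" using dwalk_uwalk Q1(1) W1_def by simp
  have uw2: "uwalk E W2" using dwalk_uwalk[OF dW2] .
  have uw3: "uwalk E W3" unfolding W3_def by (rule uwalk_rev[OF dwalk_uwalk[OF dA2]])
  have uw4: "uwalk E W4" unfolding W4_def by (rule uwalk_rev[OF dwalk_uwalk[OF Q2(1)]])
  have lW1: "last W1 = u1" using W1_def Q1 by simp
  have lW2: "last W2 = z" using W2_def by simp
  have lW3: "last W3 = u2" using W3_def A2ne hA2 by (simp add: last_rev)
  have lW4: "last W4 = w" using W4_def Q2t by simp
  have hW4: "hd W4 = u2" using W4_def Q2 by (simp add: hd_rev)
  have bW3: "butlast W3 \<noteq> []" "hd (butlast W3) = z" using W3_def A2ne by (auto simp: butlast_append)
  have bW2: "butlast W2 \<noteq> []" "hd (butlast W2) = u1" using W2_def A1ne hA1 by auto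
  define Y3 where "Y3 = butlast W3 @ W4"
  define Y2 where "Y2 = butlast W2 @ Y3"
  define Y1 where "Y1 = butlast W1 @ Y2"
  have uY3: "uwalk E Y3" unfolding Y3_def
  proof (rule uwalk_glue[OF uw3 uw4])
    show "W3 \<noteq> []" using W3_def by simp
    show "W4 \<noteq> []" using W4_def Q2 by simp
    show "last W3 = hd W4" using lW3 hW4 by simp
  qed
  have hY3: "hd Y3 = z" "Y3 \<noteq> []" using bW3 Y3_def by auto
  have uY2: "uwalk E Y2" unfolding Y2_def
    by (rule uwalk_glue[OF uw2 uY3]) (auto simp: W2_def hY3)
  have hY2: "hd Y2 = u1" "Y2 \<noteq> []" using bW2 Y2_def by auto
  have uY1: "uwalk E Y1" unfolding Y1_def
    by (rule uwalk_glue[OF uw1 uY2]) (use lW1 hY2 W1_def in auto)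
  define cs where "cs = butlast W1 @ butlast W2 @ butlast W3 @ butlast W4"
  have W4ne: "W4 \<noteq> []" using W4_def Q2 by simp
  have csY: "cs @ [w] = Y1"
    unfolding cs_def Y1_def Y2_def Y3_def
    using append_butlast_last_id[OF W4ne] lW4 by simp
  have hcs: "hd cs = w" unfolding cs_def W1_def using Q1(2) by (cases Q1) auto
  have S1: "x \<in> set (w#Q1) \<and> x \<noteq> u1" if "x \<in> set (butlast W1)" for x
    using bl_mem[OF dist1 that] lW1 W1_def by simp
  have S2: "x \<in> set P1 \<and> x \<notin> set P2" if "x \<in> set (butlast W2)" for x
    using that sp1 W2_def by auto
  have S3: "x \<in> set P2 \<and> x \<noteq> u2" if "x \<in> set (butlast W3)" for x
    using bl_mem[OF dist3 that] lW3 W3_def sp2 by auto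
  have S4: "x \<in> set Q2 \<and> x \<noteq> w" if "x \<in> set (butlast W4)" for x
    using bl_mem[OF dist4 that] lW4 W4_def by simp
  have ant: "a = b" if "(a,b) \<in> E\<^sup>*" "(b,a) \<in> E\<^sup>*" for a b using acyc_antisym[OF acyc that] .
  have d12: "x \<notin> set (butlast W2)" if "x \<in> set (butlast W1)" for x
    using S1[OF that] S2 rQ1 rP1 ant by blast
  have d13: "x \<notin> set (butlast W3)" if "x \<in> set (butlast W1)" for x
    using S1[OF that] S3 rQ1 rP2 inc2 rtrancl_trans by metis
  have d14: "x \<notin> set (butlast W4)" if "x \<in> set (butlast W1)" for x
    using S1[OF that] S4 meet by blast
  have d23: "x \<notin> set (butlast W3)" if "x \<in> set (butlast W2)" for x
    using S2[OF that] S3 by blast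
  have d24: "x \<notin> set (butlast W4)" if "x \<in> set (butlast W2)" for x
    using S2[OF that] S4 rP1 rQ2 inc1 rtrancl_trans by metis
  have d34: "x \<notin> set (butlast W4)" if "x \<in> set (butlast W3)" for x
    using S3[OF that] S4 rP2 rQ2 ant by blast
  have dcs: "distinct cs" unfolding cs_def
    using dist1 dist2 dist3 dist4 d12 d13 d14 d23 d24 d34 by (auto simp: distinct_butlast)
  have l1: "length (butlast W1) \<ge> 1" unfolding W1_def using Q1(2) by (simp add: Suc_le_eq)
  have l2: "length (butlast W2) \<ge> 1" using bW2(1) by (metis One_nat_def Suc_le_eq length_greater_0_conv)
  have l3: "length (butlast W3) \<ge> 1" using bW3(1) by (metis One_nat_def Suc_le_eq length_greater_0_conv)
  have l4: "length (butlast W4) \<ge> 1" proof -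
    have "butlast W4 = rev Q2t" unfolding W4_def Q2t by (simp add: butlast_rev)
    then show ?thesis using Q2tne by (simp add: Suc_le_eq)
  qed
  have len: "length cs \<ge> 3" unfolding cs_def using l1 l2 l3 l4 by simp
  have sc: "simple_cycle E cs"
    by (rule simple_cycle_intro[OF len dcs]) (simp add: hcs csY uY1)
  have csne: "cs \<noteq> []" using len by auto
  have "{w, hd Q1} \<in> wedges W1" unfolding W1_def using Q1(2) by (cases Q1) auto
  moreover have "Y1 = W1 @ tl Y2" unfolding Y1_def
    by (rule bl_app) (use lW1 hY2 W1_def in auto)
  ultimately have "{w, hd Q1} \<in> wedges Y1" using wedges_append[of W1 "tl Y2"] by auto
  moreover have "cycle_edges cs = wedges Y1" using cycle_edges_wedges[OF csne] hcs csY by simp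
  ultimately have edge: "{w, hd Q1} \<in> cycle_edges cs" by simp
  have zcs: "z \<in> set cs" unfolding cs_def using bW3 by (metis UnCI list.set_sel(1) set_append)
  have zP1: "z \<in> set P1" using sp1 by simp
  have "z \<noteq> u1" using sp1(2) u1P2 by blast
  then have uz: "(u1,z) \<in> E\<^sup>+" using rP1[OF zP1] by (simp add: rtrancl_eq_or_trancl)
  have zs: "(z,s) \<in> E\<^sup>*" using rP1[OF zP1] by simp
  have all: "\<forall>x\<in>set cs. (x,u1) \<in> E\<^sup>* \<or> (x,u2) \<in> E\<^sup>* \<or> (x,s) \<in> E\<^sup>*"
    unfolding cs_def using S1 S2 S3 S4 rQ1 rP1 rP2 rQ2 by auto
  show ?thesis using sc edge zcs uz zs all by blast
qed


lemma trancl_in_V: assumes "E \<subseteq> V \<times> V" "(a,b) \<in> E\<^sup>+" shows "b \<in> V"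
  using assms(2) by (rule tranclE) (use assms(1) in auto)

lemma min_elem:
  assumes "wf ((E\<^sup>+)\<inverse>)" "x \<in> C"
  shows "\<exists>m\<in>C. \<forall>y. (m,y) \<in> E\<^sup>+ \<longrightarrow> y \<notin> C"
proof -
  from assms(1) have "\<forall>Q x. x \<in> Q \<longrightarrow> (\<exists>z\<in>Q. \<forall>y. (y, z) \<in> (E\<^sup>+)\<inverse> \<longrightarrow> y \<notin> Q)"
    unfolding wf_eq_minimal .
  then obtain z where "z \<in> C" "\<forall>y. (y, z) \<in> (E\<^sup>+)\<inverse> \<longrightarrow> y \<notin> C" using assms(2) by blast
  then show ?thesis by auto
qed

theorem lemma4:
  assumes "cactus_network V E"
    and "S \<subseteq> V" and "S \<noteq> {}"
  shows "\<exists>!u. is_lca V E S u"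
proof -
  have fin: "finite V" and EV: "E \<subseteq> V \<times> V" and acyc: "acyclic E"
    and root: "\<exists>!r. r \<in> V \<and> (\<nexists>x. (x, r) \<in> E)"
    and cac: "\<And>e c1 c2. simple_cycle E c1 \<Longrightarrow> simple_cycle E c2 \<Longrightarrow>
        e \<in> cycle_edges c1 \<Longrightarrow> e \<in> cycle_edges c2 \<Longrightarrow> cycle_edges c1 = cycle_edges c2"
    using assms(1) unfolding cactus_network_def by blast+
  have finE: "finite E" using fin EV finite_subset by blast
  have wfE: "wf E" using finite_acyclic_wf[OF finE acyc] .
  have "wf (E\<inverse>)" using finite_acyclic_wf[of "E\<inverse>"] finE acyc by (simp add: acyclic_converse)
  then have wfc: "wf ((E\<^sup>+)\<inverse>)" using wf_trancl by (metis trancl_converse)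
  obtain r where r: "r \<in> V" "\<nexists>x. (x, r) \<in> E" and runiq: "\<And>r'. r' \<in> V \<Longrightarrow> \<nexists>x. (x, r') \<in> E \<Longrightarrow> r' = r"
    using root by blast
  have reach: "(r,v) \<in> E\<^sup>*" if "v \<in> V" for v
    using wfE that
  proof (induction v rule: wf_induct_rule)
    case (less v)
    show ?case
    proof (cases "\<exists>x. (x, v) \<in> E")
      case True
      then obtain x where x: "(x,v) \<in> E" by blast
      then have "x \<in> V" using EV by blast
      then have "(r,x) \<in> E\<^sup>*" using less x by blast
      then show ?thesis using x by (rule rtrancl_into_rtrancl)
    next
      case False
      then show ?thesis using runiq less by auto
    qed
  qed
  have ant: "a = b" if "(a,b) \<in> E\<^sup>*" "(b,a) \<in> E\<^sup>*" for a b using acyc_antisym[OF acyc that] .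
  have irr: "(a,a) \<notin> E\<^sup>+" for a using acyc by (simp add: acyclic_def)
  define CS where "CS = {x\<in>V. \<forall>v\<in>S. (x,v) \<in> E\<^sup>*}"
  have "r \<in> CS" unfolding CS_def using r reach assms(2) by blast
  then obtain m where m: "m \<in> CS" "\<forall>y. (m,y) \<in> E\<^sup>+ \<longrightarrow> y \<notin> CS" using min_elem[OF wfc] by blast
  have ex: "is_lca V E S m"
    unfolding is_lca_def
  proof (intro conjI)
    show "m \<in> V" "\<forall>v\<in>S. (m, v) \<in> E\<^sup>*" using m CS_def by auto
    show "\<not> (\<exists>u'. (m, u') \<in> E\<^sup>* \<and> m \<noteq> u' \<and> (\<forall>v\<in>S. (u', v) \<in> E\<^sup>*))"
    proof
      assume "\<exists>u'. (m, u') \<in> E\<^sup>* \<and> m \<noteq> u' \<and> (\<forall>v\<in>S. (u', v) \<in> E\<^sup>*)"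
      then obtain u' where u': "(m, u') \<in> E\<^sup>*" "m \<noteq> u'" "\<forall>v\<in>S. (u', v) \<in> E\<^sup>*" by blast
      then have t: "(m,u') \<in> E\<^sup>+" by (simp add: rtrancl_eq_or_trancl)
      then have "u' \<in> V" using trancl_in_V[OF EV] by blast
      then have "u' \<in> CS" using u' CS_def by blast
      then show False using m t by blast
    qed
  qed
  have uniq: "u1 = u2" if l1: "is_lca V E S u1" and l2: "is_lca V E S u2" for u1 u2
  proof (rule ccontr)
    assume ne: "u1 \<noteq> u2"
    have u1V: "u1 \<in> V" and u1S: "\<forall>v\<in>S. (u1,v) \<in> E\<^sup>*"
      and u1L: "\<And>u'. (u1, u') \<in> E\<^sup>* \<Longrightarrow> u1 \<noteq> u' \<Longrightarrow> \<exists>v\<in>S. (u', v) \<notin> E\<^sup>*"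
      using l1 unfolding is_lca_def by blast+
    have u2V: "u2 \<in> V" and u2S: "\<forall>v\<in>S. (u2,v) \<in> E\<^sup>*"
      and u2L: "\<And>u'. (u2, u') \<in> E\<^sup>* \<Longrightarrow> u2 \<noteq> u' \<Longrightarrow> \<exists>v\<in>S. (u', v) \<notin> E\<^sup>*"
      using l2 unfolding is_lca_def by blast+
    have inc1: "(u1,u2) \<notin> E\<^sup>*"
    proof
      assume "(u1,u2) \<in> E\<^sup>*"
      then obtain v where "v \<in> S" "(u2,v) \<notin> E\<^sup>*" using u1L ne by blast
      then show False using u2S by blast
    qed
    have inc2: "(u2,u1) \<notin> E\<^sup>*"
    proof
      assume "(u2,u1) \<in> E\<^sup>*"
      then obtain v where "v \<in> S" "(u1,v) \<notin> E\<^sup>*" using u2L ne by blast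
      then show False using u1S by blast
    qed
    define C2 where "C2 = {x\<in>V. (x,u1) \<in> E\<^sup>* \<and> (x,u2) \<in> E\<^sup>*}"
    have "r \<in> C2" unfolding C2_def using r reach u1V u2V by blast
    then obtain w where w: "w \<in> C2" "\<forall>y. (w,y) \<in> E\<^sup>+ \<longrightarrow> y \<notin> C2" using min_elem[OF wfc] by blast
    have wC: "(w,u1) \<in> E\<^sup>*" "(w,u2) \<in> E\<^sup>*" using w(1) unfolding C2_def by auto
    have "w \<noteq> u1" using wC inc1 by blast
    then have "(w,u1) \<in> E\<^sup>+" using wC(1) by (simp add: rtrancl_eq_or_trancl)
    then obtain q where q: "(w,q) \<in> E" "(q,u1) \<in> E\<^sup>*" by (metis tranclD)
    obtain Qq where Qq: "dwalk E Qq" "Qq \<noteq> []" "hd Qq = q" "last Qq = u1" using rtrancl_dwalk[OF q(2)] by blast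
    have dQ1: "dwalk E (w # Qq)" using Qq q by (cases Qq) auto
    obtain Q2 where Q2: "dwalk E Q2" "Q2 \<noteq> []" "hd Q2 = w" "last Q2 = u2"
      using rtrancl_dwalk[OF wC(2)] by blast
    have meet: "\<forall>x\<in>set (w#Qq). x \<in> set Q2 \<longrightarrow> x = w"
    proof (intro ballI impI)
      fix x assume x1: "x \<in> set (w#Qq)" and x2: "x \<in> set Q2"
      have a: "(w,x) \<in> E\<^sup>*" "(x,u1) \<in> E\<^sup>*" using dwalk_rtrancl[OF dQ1 x1] Qq by auto
      have b: "(x,u2) \<in> E\<^sup>*" using dwalk_rtrancl[OF Q2(1) x2] Q2 by auto
      show "x = w"
      proof (rule ccontr)
        assume "x \<noteq> w"
        then have t: "(w,x) \<in> E\<^sup>+" using a by (simp add: rtrancl_eq_or_trancl)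
        then have "x \<in> V" using trancl_in_V[OF EV] by blast
        then have "x \<in> C2" using a b unfolding C2_def by blast
        then show False using w(2) t by blast
      qed
    qed
    obtain s1 where s1: "s1 \<in> S" using assms(3) by blast
    obtain cs1 z1 where c1: "simple_cycle E cs1" "{w, hd Qq} \<in> cycle_edges cs1" "z1 \<in> set cs1"
      "(u1,z1) \<in> E\<^sup>+" "(z1,s1) \<in> E\<^sup>*"
      using construct[OF acyc dQ1 Qq(2) Qq(4) Q2 meet inc1 inc2, of s1] s1 u1S u2S by blast
    have "z1 \<noteq> u1" using c1(4) irr by blast
    moreover have "(u1,z1) \<in> E\<^sup>*" using c1(4) by (rule trancl_into_rtrancl)
    ultimately have "\<exists>v\<in>S. (z1, v) \<notin> E\<^sup>*" using u1L by metis
    then obtain s2 where s2: "s2 \<in> S" "(z1,s2) \<notin> E\<^sup>*" by blast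
    obtain cs2 z2 where c2: "simple_cycle E cs2" "{w, hd Qq} \<in> cycle_edges cs2"
      "\<forall>x\<in>set cs2. (x,u1) \<in> E\<^sup>* \<or> (x,u2) \<in> E\<^sup>* \<or> (x,s2) \<in> E\<^sup>*"
      using construct[OF acyc dQ1 Qq(2) Qq(4) Q2 meet inc1 inc2, of s2] s2 u1S u2S by blast
    have eq: "cycle_edges cs1 = cycle_edges cs2" using cac[OF c1(1) c2(1) c1(2) c2(2)] .
    have ne1: "cs1 \<noteq> []" and ne2: "cs2 \<noteq> []" using c1(1) c2(1) unfolding simple_cycle_def by auto
    have "set cs1 = set cs2" using union_cycle_edges[OF ne1] union_cycle_edges[OF ne2] eq by simp
    then have "z1 \<in> set cs2" using c1(3) by simp
    then have "(z1,u1) \<in> E\<^sup>* \<or> (z1,u2) \<in> E\<^sup>* \<or> (z1,s2) \<in> E\<^sup>*" using c2(3) by blast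
    moreover have "(z1,u1) \<notin> E\<^sup>*" using c1(4) irr by (meson trancl_rtrancl_trancl)
    moreover have "(z1,u2) \<notin> E\<^sup>*" using c1(4) inc1 by (meson trancl_into_rtrancl rtrancl_trans)
    ultimately show False using s2 by blast
  qed
  show ?thesis using ex uniq by blast
qed

end
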